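(* Let $p\ge q\ge1$. Let $Q_1:\mathbb{R}\to\mathbb{R}^{d_1}$ be measurable. Fix a measurable partition $I_1,\dots,I_l$ of $[0,1]$ and a measurable set $B\subset\mathbb{R}^{1+d_1}$. For measurable $U\subset\mathbb{R}^2$ and $I\subset\mathbb{R}$ define $E^{(1)}_Ug(x_1,x_2,x_3)=\int_U g(r,s)e(x_1r+x_2s+x_3\cdot Q_1(r))\,dr\,ds$ for $(x_1,x_2,x_3)\in\mathbb{R}\times\mathbb{R}\times\mathbb{R}^{d_1}$, and $E^{(3)}_Ih(x_1,x_3)=\int_I h(r)e(x_1r+x_3\cdot Q_1(r))\,dr$, where $e(z)=e^{2\pi iz}$. Suppose $C$ is a number such that $\|E^{(3)}_{[0,1]}h\|_{L^p(B)}\le C\big(\sum_i\|E^{(3)}_{I_i}h\|_{L^p(B)}^q\big)^{1/q}$ for all measurable $h$. Then for every measurable $B'\subset\mathbb{R}$ and every measurable $g$, $\|E^{(1)}_{[0,1]^2}g\|_{L^p(B\times B')}\le C\big(\sum_i\|E^{(1)}_{I_i\times[0,1]}g\|_{L^p(B\times B')}^q\big)^{1/q}$, where $B\times B'$ denotes the set $\{(x_1,x_2,x_3):(x_1,x_3)\in B,\ x_2\in B'\}\subset\mathbb{R}^{2+d_1}$. *)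

theory Defs
  imports "HOL-Analysis.Analysis"
begin

definition e :: "real \<Rightarrow> complex" where
  "e z = exp (2 * complex_of_real pi * \<i> * complex_of_real z)"

text \<open>Real powers of extended nonnegative reals (used with positive exponents):
  infinity to a positive power is infinity.\<close>
definition enn_powr :: "ennreal \<Rightarrow> real \<Rightarrow> ennreal" where
  "enn_powr x a = (if x = top then top else ennreal (enn2real x powr a))"

definition Lp_norm :: "real \<Rightarrow> 'b measure \<Rightarrow> 'b set \<Rightarrow> ('b \<Rightarrow> complex) \<Rightarrow> ennreal" where
  "Lp_norm p M B F = enn_powr (\<integral>\<^sup>+ x\<in>B. ennreal (cmod (F x) powr p) \<partial>M) (1 / p)"

definition E1 :: "(real \<Rightarrow> 'a::euclidean_space) \<Rightarrow> (real \<times> real) set \<Rightarrow> (real \<times> real \<Rightarrow> complex)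
    \<Rightarrow> real \<times> real \<times> 'a \<Rightarrow> complex" where
  "E1 Q U g = (\<lambda>(x1, x2, x3). set_lebesgue_integral lebesgue U
      (\<lambda>(r, s). g (r, s) * e (x1 * r + x2 * s + x3 \<bullet> Q r)))"

definition E3 :: "(real \<Rightarrow> 'a::euclidean_space) \<Rightarrow> real set \<Rightarrow> (real \<Rightarrow> complex)
    \<Rightarrow> real \<times> 'a \<Rightarrow> complex" where
  "E3 Q I h = (\<lambda>(x1, x3). set_lebesgue_integral lebesgue I
      (\<lambda>r. h r * e (x1 * r + x3 \<bullet> Q r)))"

end

theory Submission
  imports Defs
begin


lemma lebesgue_sigma_finite: "sigma_finite_measure (lebesgue :: 'a::euclidean_space measure)"
proof
  obtain A :: "'a set set" where A: "countable A" "A \<subseteq> sets lborel" "\<Union>A = space lborel" "\<forall>a\<in>A. emeasure lborel a \<noteq> \<infinity>"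
    using lborel.sigma_finite_countable by blast
  show "\<exists>A. countable A \<and> A \<subseteq> sets (lebesgue::'a measure) \<and> \<Union> A = space lebesgue \<and> (\<forall>a\<in>A. emeasure lebesgue a \<noteq> \<infinity>)"
    using A by (intro exI[of _ A]) auto
qed

lemma sets_lebesgue_Times_UNIV:
  assumes "S \<in> sets (lebesgue :: 'a::euclidean_space measure)"
  shows "S \<times> (UNIV :: 'b::euclidean_space set) \<in> sets (lebesgue :: ('a \<times> 'b) measure)"
proof -
  obtain S0 N N' where S: "S = S0 \<union> N" "N \<subseteq> N'" "N' \<in> null_sets lborel" "S0 \<in> sets lborel"
    using sets_completionE[OF assms] by metis
  have "S0 \<times> (UNIV :: 'b set) \<in> sets (lborel \<Otimes>\<^sub>M lborel)" using S by auto
  hence 1: "S0 \<times> (UNIV :: 'b set) \<in> sets (lborel :: ('a \<times> 'b) measure)" by (simp only: lborel_prod)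
  have "N' \<times> (UNIV :: 'b set) \<in> null_sets (lborel \<Otimes>\<^sub>M lborel)"
    using S by (intro lborel.times_in_null_sets1) auto
  hence 2: "N' \<times> (UNIV :: 'b set) \<in> null_sets (lborel :: ('a \<times> 'b) measure)" by (simp only: lborel_prod)
  have "S \<times> (UNIV :: 'b set) = S0 \<times> UNIV \<union> N \<times> UNIV" using S by auto
  then show ?thesis
    by (rule sets_completionI[of _ _ _ "N' \<times> UNIV"]) (use S 1 2 in auto)
qed

lemma sets_lebesgue_UNIV_Times:
  assumes "S \<in> sets (lebesgue :: 'b::euclidean_space measure)"
  shows "(UNIV :: 'a::euclidean_space set) \<times> S \<in> sets (lebesgue :: ('a \<times> 'b) measure)"
proof -
  obtain S0 N N' where S: "S = S0 \<union> N" "N \<subseteq> N'" "N' \<in> null_sets lborel" "S0 \<in> sets lborel"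
    using sets_completionE[OF assms] by metis
  have "(UNIV :: 'a set) \<times> S0 \<in> sets (lborel \<Otimes>\<^sub>M lborel)" using S by auto
  hence 1: "(UNIV :: 'a set) \<times> S0 \<in> sets (lborel :: ('a \<times> 'b) measure)" by (simp only: lborel_prod)
  have "(UNIV :: 'a set) \<times> N' \<in> null_sets (lborel \<Otimes>\<^sub>M lborel)"
    using S by (intro lborel.times_in_null_sets2) auto
  hence 2: "(UNIV :: 'a set) \<times> N' \<in> null_sets (lborel :: ('a \<times> 'b) measure)" by (simp only: lborel_prod)
  have "(UNIV :: 'a set) \<times> S = UNIV \<times> S0 \<union> UNIV \<times> N" using S by auto
  then show ?thesis
    by (rule sets_completionI[of _ _ _ "UNIV \<times> N'"]) (use S 1 2 in auto)
qed

lemma measurable_fst_lebesgue: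
  assumes "f \<in> borel_measurable (lebesgue :: 'a::euclidean_space measure)"
  shows "(\<lambda>w. f (fst w)) \<in> borel_measurable (lebesgue :: ('a \<times> 'b::euclidean_space) measure)"
proof (rule measurableI)
  fix A :: "'c set" assume "A \<in> sets borel"
  hence "f -` A \<in> sets lebesgue" using measurable_sets[OF assms] by auto
  hence "(f -` A) \<times> (UNIV::'b set) \<in> sets (lebesgue :: ('a \<times> 'b) measure)"
    by (rule sets_lebesgue_Times_UNIV)
  moreover have "(\<lambda>w. f (fst w)) -` A \<inter> space lebesgue = (f -` A) \<times> (UNIV::'b set)" by auto
  ultimately show "(\<lambda>w. f (fst w)) -` A \<inter> space (lebesgue :: ('a \<times> 'b) measure) \<in> sets lebesgue" by simp
qed auto



lemma completion_ex_borel_complex: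
  fixes f :: "'a \<Rightarrow> complex"
  assumes "f \<in> borel_measurable (completion M)"
  shows "\<exists>f'\<in>borel_measurable M. AE x in M. f x = f' x"
proof -
  have "(\<lambda>x. Re (f x)) \<in> borel_measurable (completion M)" "(\<lambda>x. Im (f x)) \<in> borel_measurable (completion M)"
    using assms by auto
  then obtain fr fi where fr: "fr \<in> borel_measurable M" "AE x in M. Re (f x) = fr x"
    and fi: "fi \<in> borel_measurable M" "AE x in M. Im (f x) = fi x"
    using completion_ex_borel_measurable_real by metis
  show ?thesis
  proof (intro bexI)
    show "AE x in M. f x = complex_of_real (fr x) + \<i> * complex_of_real (fi x)"
      using fr(2) fi(2) by eventually_elim (simp add: complex_eq_iff)
    show "(\<lambda>x. complex_of_real (fr x) + \<i> * complex_of_real (fi x)) \<in> borel_measurable M"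
      using fr(1) fi(1) by measurable
  qed
qed

lemma lebesgue_fubini:
  fixes f :: "'a::euclidean_space \<times> 'b::euclidean_space \<Rightarrow> complex"
  assumes int: "integrable lebesgue f"
  shows "(\<lambda>x. \<integral>y. f (x, y) \<partial>lebesgue) \<in> borel_measurable lebesgue"
    and "integral\<^sup>L lebesgue f = (\<integral>x. (\<integral>y. f (x, y) \<partial>lebesgue) \<partial>lebesgue)"
proof -
  have fm: "f \<in> borel_measurable lebesgue" using int by auto
  obtain f' where f'm: "f' \<in> borel_measurable (lborel :: ('a \<times> 'b) measure)"
    and ae: "AE z in lborel. f z = f' z"
    using completion_ex_borel_complex[OF fm] by blast
  have f'm2 [measurable]: "f' \<in> borel_measurable (lborel \<Otimes>\<^sub>M lborel)"
    using f'm by (simp only: lborel_prod)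
  have int': "integrable lborel f'"
  proof -
    have "integrable lebesgue f'"
      by (rule integrable_cong_AE_imp[OF int measurable_completion[OF f'm] AE_completion[OF ae]])
    thus ?thesis using integrable_completion[OF f'm] by simp
  qed
  have int'': "integrable (lborel \<Otimes>\<^sub>M lborel) f'" using int' by (simp only: lborel_prod)
  have ae2: "AE z in lborel \<Otimes>\<^sub>M lborel. f z = f' z" using ae by (simp only: lborel_prod)
  have ae3: "AE x in lborel. AE y in lborel. f (x, y) = f' (x, y)"
    using lborel_pair.AE_pair[OF ae2] .
  define K' where "K' x = (\<integral>y. f' (x, y) \<partial>lborel)" for x
  have K'm: "K' \<in> borel_measurable lborel"
    unfolding K'_def by measurable
  have K'eq: "AE x in lborel. K' x = (\<integral>y. f (x, y) \<partial>lebesgue)"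
    using ae3
  proof eventually_elim
    case (elim x)
    have m1: "(\<lambda>y. f' (x, y)) \<in> borel_measurable lborel" by measurable
    hence m2: "(\<lambda>y. f' (x, y)) \<in> borel_measurable lebesgue" by (rule measurable_completion)
    have ae4: "AE y in lebesgue. f' (x, y) = f (x, y)" using elim by (auto intro: AE_completion)
    have m3: "(\<lambda>y. f (x, y)) \<in> borel_measurable lebesgue"
      by (rule borel_measurable_AE[OF m2 ae4])
    have "K' x = (\<integral>y. f' (x, y) \<partial>lebesgue)" unfolding K'_def using integral_completion[OF m1] by simp
    also have "\<dots> = (\<integral>y. f (x, y) \<partial>lebesgue)" by (rule integral_cong_AE[OF m2 m3 ae4])
    finally show ?case .
  qed
  have K'eq2: "AE x in lebesgue. K' x = (\<integral>y. f (x, y) \<partial>lebesgue)" using K'eq by (rule AE_completion)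
  show Km: "(\<lambda>x. \<integral>y. f (x, y) \<partial>lebesgue) \<in> borel_measurable lebesgue"
    by (rule borel_measurable_AE[OF measurable_completion[OF K'm] K'eq2])
  have "integral\<^sup>L lebesgue f = integral\<^sup>L lebesgue f'"
    by (rule integral_cong_AE[OF fm measurable_completion[OF f'm]]) (rule AE_completion[OF ae])
  also have "\<dots> = integral\<^sup>L lborel f'" by (rule integral_completion[OF f'm])
  also have "\<dots> = integral\<^sup>L (lborel \<Otimes>\<^sub>M lborel) f'" by (simp only: lborel_prod)
  also have "\<dots> = (\<integral>x. K' x \<partial>lborel)" unfolding K'_def by (rule lborel_pair.integral_fst'[OF int'', symmetric])
  also have "\<dots> = (\<integral>x. K' x \<partial>lebesgue)" by (rule integral_completion[OF K'm, symmetric])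
  also have "\<dots> = (\<integral>x. (\<integral>y. f (x, y) \<partial>lebesgue) \<partial>lebesgue)"
    by (rule integral_cong_AE[OF measurable_completion[OF K'm] Km K'eq2])
  finally show "integral\<^sup>L lebesgue f = (\<integral>x. (\<integral>y. f (x, y) \<partial>lebesgue) \<partial>lebesgue)" .
qed



lemma tonelli_perm:
  fixes G :: "real \<times> real \<times> 'a::euclidean_space \<Rightarrow> ennreal"
  assumes Gm: "G \<in> borel_measurable lborel"
  shows "(\<lambda>x2. \<integral>\<^sup>+y. G (fst y, x2, snd y) \<partial>lborel) \<in> borel_measurable lborel"
    and "(\<integral>\<^sup>+z. G z \<partial>lborel) = (\<integral>\<^sup>+x2. (\<integral>\<^sup>+y. G (fst y, x2, snd y) \<partial>lborel) \<partial>lborel)"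
proof -
  have G1: "G \<in> borel_measurable ((lborel::real measure) \<Otimes>\<^sub>M (lborel :: (real \<times> 'a) measure))"
    using Gm by (simp only: lborel_prod)
  have G2[measurable]: "G \<in> borel_measurable ((lborel::real measure) \<Otimes>\<^sub>M ((lborel :: real measure) \<Otimes>\<^sub>M (lborel :: 'a measure)))"
    using Gm by (simp only: lborel_prod)
  show "(\<lambda>x2. \<integral>\<^sup>+y. G (fst y, x2, snd y) \<partial>lborel) \<in> borel_measurable lborel"
  proof -
    have "(\<lambda>(x2, y). G (fst y, x2, snd y)) \<in> borel_measurable ((lborel::real measure) \<Otimes>\<^sub>M ((lborel :: real measure) \<Otimes>\<^sub>M (lborel :: 'a measure)))"
      by measurable
    hence "(\<lambda>(x2, y). G (fst y, x2, snd y)) \<in> borel_measurable ((lborel::real measure) \<Otimes>\<^sub>M (lborel :: (real \<times> 'a) measure))"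
      by (simp only: lborel_prod)
    thus ?thesis by (rule lborel.borel_measurable_nn_integral)
  qed
  have inner: "(\<integral>\<^sup>+w. G (x1, w) \<partial>lborel) = (\<integral>\<^sup>+x2. \<integral>\<^sup>+x3. G (x1, x2, x3) \<partial>lborel \<partial>lborel)" for x1
  proof -
    have m: "(\<lambda>w. G (x1, w)) \<in> borel_measurable ((lborel :: real measure) \<Otimes>\<^sub>M (lborel :: 'a measure))"
      by measurable
    have "(\<integral>\<^sup>+w. G (x1, w) \<partial>lborel) = (\<integral>\<^sup>+w. G (x1, w) \<partial>((lborel :: real measure) \<Otimes>\<^sub>M (lborel :: 'a measure)))"
      by (simp only: lborel_prod)
    also have "\<dots> = (\<integral>\<^sup>+x2. \<integral>\<^sup>+x3. G (x1, x2, x3) \<partial>lborel \<partial>lborel)"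
      using lborel.nn_integral_fst[OF m] by simp
    finally show ?thesis .
  qed
  have inner2: "(\<integral>\<^sup>+y. G (fst y, x2, snd y) \<partial>lborel) = (\<integral>\<^sup>+x1. \<integral>\<^sup>+x3. G (x1, x2, x3) \<partial>lborel \<partial>lborel)" for x2
  proof -
    have m: "(\<lambda>y. G (fst y, x2, snd y)) \<in> borel_measurable ((lborel :: real measure) \<Otimes>\<^sub>M (lborel :: 'a measure))"
      by measurable
    have "(\<integral>\<^sup>+y. G (fst y, x2, snd y) \<partial>lborel) = (\<integral>\<^sup>+y. G (fst y, x2, snd y) \<partial>((lborel :: real measure) \<Otimes>\<^sub>M (lborel :: 'a measure)))"
      by (simp only: lborel_prod)
    also have "\<dots> = (\<integral>\<^sup>+x1. \<integral>\<^sup>+x3. G (x1, x2, x3) \<partial>lborel \<partial>lborel)"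
      using lborel.nn_integral_fst[OF m] by simp
    finally show ?thesis .
  qed
  have Hm: "(\<lambda>(x1, x2). \<integral>\<^sup>+x3. G (x1, x2, x3) \<partial>lborel) \<in> borel_measurable ((lborel :: real measure) \<Otimes>\<^sub>M (lborel :: real measure))"
    by measurable
  have "(\<integral>\<^sup>+z. G z \<partial>lborel) = (\<integral>\<^sup>+z. G z \<partial>((lborel::real measure) \<Otimes>\<^sub>M (lborel :: (real \<times> 'a) measure)))"
    by (simp only: lborel_prod)
  also have "\<dots> = (\<integral>\<^sup>+x1. \<integral>\<^sup>+w. G (x1, w) \<partial>lborel \<partial>lborel)"
    by (rule lborel.nn_integral_fst[OF G1, symmetric])
  also have "\<dots> = (\<integral>\<^sup>+x1. \<integral>\<^sup>+x2. \<integral>\<^sup>+x3. G (x1, x2, x3) \<partial>lborel \<partial>lborel \<partial>lborel)"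
    by (simp only: inner)
  also have "\<dots> = (\<integral>\<^sup>+x2. \<integral>\<^sup>+x1. \<integral>\<^sup>+x3. G (x1, x2, x3) \<partial>lborel \<partial>lborel \<partial>lborel)"
    using lborel_pair.Fubini'[OF Hm] by simp
  also have "\<dots> = (\<integral>\<^sup>+x2. (\<integral>\<^sup>+y. G (fst y, x2, snd y) \<partial>lborel) \<partial>lborel)"
    by (simp only: inner2)
  finally show "(\<integral>\<^sup>+z. G z \<partial>lborel) = (\<integral>\<^sup>+x2. (\<integral>\<^sup>+y. G (fst y, x2, snd y) \<partial>lborel) \<partial>lborel)" .
qed



lemma lebesgue_set_borel_AE:
  assumes "S \<in> sets (lebesgue :: 'a::euclidean_space measure)"
  obtains S0 N where "S0 \<in> sets lborel" "N \<in> null_sets lborel" "\<And>y. y \<notin> N \<Longrightarrow> (y \<in> S \<longleftrightarrow> y \<in> S0)"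
proof -
  have "(indicator S :: 'a \<Rightarrow> real) \<in> borel_measurable lebesgue" using assms by simp
  from completion_ex_borel_measurable_real[OF this]
  obtain b :: "'a \<Rightarrow> real" where bm: "b \<in> borel_measurable lborel" and ae: "AE y in lborel. indicator S y = b y"
    by blast
  define S0 where "S0 = {y. b y = (1::real)}"
  have S0: "S0 \<in> sets lborel" unfolding S0_def using bm by measurable
  have "AE y in lborel. (y \<in> S \<longleftrightarrow> y \<in> S0)"
    using ae by eventually_elim (auto simp: S0_def indicator_def split: if_splits)
  then obtain N where N1: "{y \<in> space lborel. \<not> (y \<in> S \<longleftrightarrow> y \<in> S0)} \<subseteq> N" "emeasure lborel N = 0" "N \<in> sets lborel"
    by (rule AE_E)
  have N: "N \<in> null_sets lborel" "{y \<in> space lborel. \<not> (y \<in> S \<longleftrightarrow> y \<in> S0)} \<subseteq> N"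
    using N1 by auto
  show ?thesis
    by (rule that[OF S0 N(1)]) (use N(2) in auto)
qed

definition BBset :: "(real \<times> 'a) set \<Rightarrow> real set \<Rightarrow> (real \<times> real \<times> 'a) set" where
  "BBset B B' = {(x1, x2, x3). (x1, x3) \<in> B \<and> x2 \<in> B'}"

lemma decomp:
  fixes G :: "real \<times> real \<times> 'a::euclidean_space \<Rightarrow> ennreal" and B :: "(real \<times> 'a) set" and B' :: "real set"
  assumes Gm: "G \<in> borel_measurable lborel" and B: "B \<in> sets lebesgue" and B': "B' \<in> sets lebesgue"
  shows "\<exists>A. A \<in> borel_measurable lborel \<and>
     (\<integral>\<^sup>+z. G z * indicator (BBset B B') z \<partial>lebesgue) = (\<integral>\<^sup>+x2. A x2 \<partial>lborel) \<and>
     (AE x2 in lborel. A x2 = indicator B' x2 * (\<integral>\<^sup>+y. G (fst y, x2, snd y) * indicator B y \<partial>lebesgue))"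
proof -
  obtain B0 N where B0: "B0 \<in> sets lborel" "N \<in> null_sets lborel" "\<And>y. y \<notin> N \<Longrightarrow> (y \<in> B \<longleftrightarrow> y \<in> B0)"
    using lebesgue_set_borel_AE[OF B] by blast
  obtain B0' N' where B0': "B0' \<in> sets lborel" "N' \<in> null_sets lborel" "\<And>y. y \<notin> N' \<Longrightarrow> (y \<in> B' \<longleftrightarrow> y \<in> B0')"
    using lebesgue_set_borel_AE[OF B'] by blast
  define X where "X = {z :: real \<times> real \<times> 'a. (fst z, snd (snd z)) \<in> N \<or> fst (snd z) \<in> N'}"
  have Nm[measurable]: "N \<in> sets lborel" "N' \<in> sets lborel" "B0 \<in> sets lborel" "B0' \<in> sets lborel"
    using B0 B0' by auto
  have Xm[measurable]: "X \<in> sets lborel"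
  proof -
    have "(\<lambda>z :: real \<times> real \<times> 'a. (fst z, snd (snd z))) \<in> lborel \<rightarrow>\<^sub>M lborel"
      by (simp only: measurable_lborel1 measurable_lborel2) (intro borel_measurable_continuous_onI continuous_intros)
    moreover have "(\<lambda>z :: real \<times> real \<times> 'a. fst (snd z)) \<in> lborel \<rightarrow>\<^sub>M lborel"
      by (simp only: measurable_lborel1 measurable_lborel2) (intro borel_measurable_continuous_onI continuous_intros)
    ultimately show ?thesis unfolding X_def by measurable
  qed
  have "(\<integral>\<^sup>+z. indicator X z \<partial>lborel) = (\<integral>\<^sup>+x2. (\<integral>\<^sup>+y. indicator X (fst y, x2, snd y) \<partial>lborel) \<partial>lborel)"
    by (rule tonelli_perm(2)) measurable
  also have "\<dots> = (\<integral>\<^sup>+(x2::real). 0 \<partial>lborel)"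
  proof (rule nn_integral_cong_AE)
    show "AE x2 in lborel. (\<integral>\<^sup>+y. indicator X (fst y, x2, snd y) \<partial>lborel) = 0"
      using AE_not_in[OF B0'(2)]
    proof eventually_elim
      case (elim x2)
      show ?case
      proof (rule nn_integral_0_iff_AE[THEN iffD2])
        show "(\<lambda>y. indicator X (fst y, x2, snd y)) \<in> borel_measurable lborel"
        proof -
          have "(\<lambda>y :: real \<times> 'a. (fst y, x2, snd y)) \<in> lborel \<rightarrow>\<^sub>M lborel"
            by (simp only: measurable_lborel1 measurable_lborel2) (intro borel_measurable_continuous_onI continuous_intros)
          thus ?thesis by measurable
        qed
        show "AE y in lborel. (indicator X (fst y, x2, snd y) :: ennreal) = 0"
          using AE_not_in[OF B0(2)] by eventually_elim (use elim in \<open>auto simp: X_def\<close>)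
      qed
    qed
  qed
  finally have "emeasure lborel X = 0" using nn_integral_indicator[OF Xm] by simp
  hence Xnull: "X \<in> null_sets lborel" using Xm by auto
  define BB0 where "BB0 = BBset B0 B0'"
  have BB0m[measurable]: "BB0 \<in> sets (lborel :: (real \<times> real \<times> 'a) measure)"
  proof -
    have [measurable]: "(\<lambda>z :: real \<times> real \<times> 'a. (fst z, snd (snd z))) \<in> lborel \<rightarrow>\<^sub>M lborel"
      by (simp only: measurable_lborel1 measurable_lborel2) (intro borel_measurable_continuous_onI continuous_intros)
    have [measurable]: "(\<lambda>z :: real \<times> real \<times> 'a. fst (snd z)) \<in> lborel \<rightarrow>\<^sub>M lborel"
      by (simp only: measurable_lborel1 measurable_lborel2) (intro borel_measurable_continuous_onI continuous_intros)
    have eq: "BB0 = {z. (fst z, snd (snd z)) \<in> B0 \<and> fst (snd z) \<in> B0'}"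
      by (auto simp: BB0_def BBset_def)
    show ?thesis unfolding eq by measurable
  qed
  define A where "A x2 = (\<integral>\<^sup>+y. G (fst y, x2, snd y) * indicator BB0 (fst y, x2, snd y) \<partial>lborel)" for x2
  have GBm: "(\<lambda>z. G z * indicator BB0 z) \<in> borel_measurable lborel" using Gm by measurable
  show ?thesis
  proof (intro exI conjI)
    show "A \<in> borel_measurable lborel" unfolding A_def by (rule tonelli_perm(1)[OF GBm])
    have "(\<integral>\<^sup>+z. G z * indicator (BBset B B') z \<partial>lebesgue) = (\<integral>\<^sup>+z. G z * indicator (BBset B B') z \<partial>lborel)"
      by (rule nn_integral_completion)
    also have "\<dots> = (\<integral>\<^sup>+z. G z * indicator BB0 z \<partial>lborel)"
    proof (rule nn_integral_cong_AE)
      show "AE z in lborel. G z * indicator (BBset B B') z = G z * indicator BB0 z"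
        using AE_not_in[OF Xnull]
      proof eventually_elim
        case (elim z)
        obtain x1 x2 x3 where z: "z = (x1, x2, x3)" by (cases z) auto
        have "(x1, x3) \<in> B \<longleftrightarrow> (x1, x3) \<in> B0" "x2 \<in> B' \<longleftrightarrow> x2 \<in> B0'"
          using elim B0(3) B0'(3) by (auto simp: X_def z)
        thus ?case by (simp add: z BB0_def BBset_def indicator_def)
      qed
    qed
    also have "\<dots> = (\<integral>\<^sup>+x2. A x2 \<partial>lborel)" unfolding A_def by (rule tonelli_perm(2)[OF GBm])
    finally show "(\<integral>\<^sup>+z. G z * indicator (BBset B B') z \<partial>lebesgue) = (\<integral>\<^sup>+x2. A x2 \<partial>lborel)" .
    show "AE x2 in lborel. A x2 = indicator B' x2 * (\<integral>\<^sup>+y. G (fst y, x2, snd y) * indicator B y \<partial>lebesgue)"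
      using AE_not_in[OF B0'(2)]
    proof eventually_elim
      case (elim x2)
      note el = elim
      have "A x2 = (\<integral>\<^sup>+y. indicator B' x2 * (G (fst y, x2, snd y) * indicator B y) \<partial>lborel)"
        unfolding A_def
      proof (rule nn_integral_cong_AE)
        show "AE y in lborel. G (fst y, x2, snd y) * indicator BB0 (fst y, x2, snd y) =
            indicator B' x2 * (G (fst y, x2, snd y) * indicator B y)"
          using AE_not_in[OF B0(2)]
        proof eventually_elim
          case (elim y)
          have "y \<in> B \<longleftrightarrow> y \<in> B0" "x2 \<in> B' \<longleftrightarrow> x2 \<in> B0'" using el elim B0(3) B0'(3) by auto
          thus ?case by (cases y) (simp add: BB0_def BBset_def indicator_def)
        qed
      qed
      also have "\<dots> = indicator B' x2 * (\<integral>\<^sup>+y. G (fst y, x2, snd y) * indicator B y \<partial>lborel)"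
        by (cases "x2 \<in> B'") simp_all
      also have "\<dots> = indicator B' x2 * (\<integral>\<^sup>+y. G (fst y, x2, snd y) * indicator B y \<partial>lebesgue)"
        by (simp add: nn_integral_completion)
      finally show ?case .
    qed
  qed
qed



lemma enn_powr_ennreal: "0 \<le> t \<Longrightarrow> enn_powr (ennreal t) a = ennreal (t powr a)"
  by (simp add: enn_powr_def)

lemma enn_powr_top[simp]: "enn_powr top a = top"
  by (simp add: enn_powr_def)

lemma enn_powr_zero[simp]: "enn_powr 0 a = 0"
  by (simp add: enn_powr_def)

lemma enn_powr_eq_top_iff: "enn_powr x a = top \<longleftrightarrow> x = top"
  by (simp add: enn_powr_def)

lemma enn_powr_powr: "enn_powr (enn_powr x a) b = enn_powr x (a * b)"
  by (cases x) (simp_all add: enn_powr_def powr_powr)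

lemma enn_powr_1: "enn_powr x 1 = x"
  by (cases x) (simp_all add: enn_powr_def)

lemma enn_powr_mono: assumes "0 \<le> a" "x \<le> y" shows "enn_powr x a \<le> enn_powr y a"
proof (cases "y = top")
  case True then show ?thesis by simp
next
  case False
  then obtain t where t: "y = ennreal t" "0 \<le> t" by (cases y) auto
  with assms obtain s where s: "x = ennreal s" "0 \<le> s" "s \<le> t"
    by (cases x) (auto simp: ennreal_le_iff top_unique)
  show ?thesis using s t assms by (simp add: enn_powr_def powr_mono2)
qed

lemma enn_powr_mult: assumes "0 < a" shows "enn_powr (x * y) a = enn_powr x a * enn_powr y a"
proof (cases x; cases y)
  fix s t assume st: "x = ennreal s" "0 \<le> s" "y = ennreal t" "0 \<le> t"
  then show ?thesis by (simp add: enn_powr_def ennreal_mult[symmetric] powr_mult)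
next
  fix s assume st: "x = ennreal s" "0 \<le> s" "y = top"
  then show ?thesis using assms
    by (cases "s = 0") (simp_all add: enn_powr_def ennreal_mult_top ennreal_top_mult)
next
  fix t assume st: "x = top" "y = ennreal t" "0 \<le> t"
  then show ?thesis using assms
    by (cases "t = 0") (simp_all add: enn_powr_def ennreal_mult_top ennreal_top_mult)
next
  assume "x = top" "y = top" then show ?thesis by simp
qed

lemma borel_measurable_enn_powr[measurable (raw)]:
  assumes [measurable]: "f \<in> borel_measurable M"
  shows "(\<lambda>x. enn_powr (f x) a) \<in> borel_measurable M"
proof -
  have [measurable]: "{x \<in> space M. f x = top} \<in> sets M" by measurable
  show ?thesis unfolding enn_powr_def by measurable
qed

lemma convex_powr_nonneg:
  fixes r :: real assumes r: "r \<ge> 1" shows "convex_on {0..} (\<lambda>x. x powr r)"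
proof (rule convex_onI)
  show "convex {0::real..}" by simp
  fix t x y :: real assume t: "0 < t" "t < 1" and xy: "x \<in> {0..}" "y \<in> {0..}"
  have tr1: "t powr r \<le> t" "(1 - t) powr r \<le> 1 - t"
    using t r by (smt (verit) powr_le1 powr_mono' powr_one_eq_one powr_one)+
  consider "x = 0" | "y = 0" | "x > 0 \<and> y > 0" using xy by force
  then show "((1 - t) *\<^sub>R x + t *\<^sub>R y) powr r \<le> (1 - t) * x powr r + t * y powr r"
  proof cases
    case 1
    have "((1 - t) *\<^sub>R x + t *\<^sub>R y) powr r = t powr r * y powr r" using 1 t xy by (simp add: powr_mult)
    also have "\<dots> \<le> t * y powr r" using tr1 by (simp add: mult_right_mono)
    finally show ?thesis using 1 by simp
  next
    case 2
    have "((1 - t) *\<^sub>R x + t *\<^sub>R y) powr r = (1 - t) powr r * x powr r" using 2 t xy by (simp add: powr_mult)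
    also have "\<dots> \<le> (1 - t) * x powr r" using tr1 by (simp add: mult_right_mono)
    finally show ?thesis using 2 by simp
  next
    case 3
    show ?thesis using convex_onD[OF powr_convex[OF r], of t x y] 3 t by simp
  qed
qed



lemma minkowski_enn:
  fixes f :: "'i \<Rightarrow> 'x \<Rightarrow> ennreal" and r :: real
  assumes S: "finite S" and r: "r \<ge> 1" and fm: "\<And>i. i \<in> S \<Longrightarrow> f i \<in> borel_measurable M"
  shows "enn_powr (\<integral>\<^sup>+x. enn_powr (\<Sum>i\<in>S. f i x) r \<partial>M) (1/r)
     \<le> (\<Sum>i\<in>S. enn_powr (\<integral>\<^sup>+x. enn_powr (f i x) r \<partial>M) (1/r))"
proof -
  define NN where "NN i = (\<integral>\<^sup>+x. enn_powr (f i x) r \<partial>M)" for i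
  show ?thesis
  proof (cases "\<exists>i\<in>S. NN i = top")
    case True
    then obtain j where j: "j \<in> S" "NN j = top" by blast
    have "top = enn_powr (NN j) (1/r)" using j by simp
    also have "\<dots> \<le> (\<Sum>i\<in>S. enn_powr (NN i) (1/r))"
      by (rule member_le_sum) (use j S in auto)
    finally show ?thesis unfolding NN_def by (simp add: top_unique)
  next
    case False
    hence fin: "\<And>i. i \<in> S \<Longrightarrow> NN i < top" by (simp add: less_top)
    define n where "n i = enn2real (NN i) powr (1/r)" for i
    have n0: "n i \<ge> 0" for i unfolding n_def by simp
    have NNn: "NN i = ennreal (n i powr r)" if "i \<in> S" for i
    proof -
      have "NN i = ennreal (enn2real (NN i))" using fin[OF that] by simp
      also have "enn2real (NN i) = n i powr r" unfolding n_def using r by (simp add: powr_powr)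
      finally show ?thesis .
    qed
    have NNpow: "enn_powr (NN i) (1/r) = ennreal (n i)" if "i \<in> S" for i
      using fin[OF that] by (simp add: enn_powr_def n_def)
    have aefin: "AE x in M. \<forall>i\<in>S. f i x \<noteq> top"
    proof (subst AE_finite_all[OF S], intro ballI)
      fix i assume i: "i \<in> S"
      have "AE x in M. enn_powr (f i x) r \<noteq> \<infinity>"
        using fin[OF i] fm[OF i] unfolding NN_def by (intro nn_integral_PInf_AE) auto
      thus "AE x in M. f i x \<noteq> top" by eventually_elim (simp add: enn_powr_eq_top_iff)
    qed
    define S' where "S' = {i\<in>S. n i > 0}"
    have S'S: "S' \<subseteq> S" and finS': "finite S'" using S by (auto simp: S'_def)
    have aezero: "AE x in M. \<forall>i\<in>S - S'. f i x = 0"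
    proof (subst AE_finite_all, use S in simp, intro ballI)
      fix i assume i: "i \<in> S - S'"
      hence "n i = 0" using n0[of i] by (auto simp: S'_def)
      hence "NN i = 0" using NNn[of i] i r by simp
      hence "AE x in M. enn_powr (f i x) r = 0"
        using fm i unfolding NN_def by (subst (asm) nn_integral_0_iff_AE) auto
      thus "AE x in M. f i x = 0"
      proof eventually_elim
        case (elim x)
        thus ?case using r by (cases "f i x") (auto simp: enn_powr_def)
      qed
    qed
    define s where "s = (\<Sum>i\<in>S'. n i)"
    have sS: "(\<Sum>i\<in>S. n i) = s"
      unfolding s_def by (rule sum.mono_neutral_right[OF S S'S]) (use n0 in \<open>auto simp: S'_def less_le\<close>)
    have RHS: "(\<Sum>i\<in>S. enn_powr (NN i) (1/r)) = ennreal s"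
      using NNpow sS n0 by (simp add: sum_ennreal)
    show ?thesis
    proof (cases "S' = {}")
      case True
      have "(\<integral>\<^sup>+x. enn_powr (\<Sum>i\<in>S. f i x) r \<partial>M) = (\<integral>\<^sup>+x. 0 \<partial>M)"
        by (rule nn_integral_cong_AE) (use aezero in \<open>eventually_elim, simp add: True\<close>)
      thus ?thesis by simp
    next
      case False
      have spos: "s > 0" unfolding s_def using False finS' by (intro sum_pos) (auto simp: S'_def)
      define c where "c i = (n i / s) * (s powr r / n i powr r)" for i
      have c0: "c i \<ge> 0" for i unfolding c_def using spos n0[of i] by simp
      have pw: "enn_powr (\<Sum>i\<in>S. f i x) r \<le> (\<Sum>i\<in>S'. ennreal (c i) * enn_powr (f i x) r)"
        if x1: "\<forall>i\<in>S. f i x \<noteq> top" and x2: "\<forall>i\<in>S - S'. f i x = 0" for x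
      proof -
        define u where "u i = enn2real (f i x)" for i
        have u0: "u i \<ge> 0" for i unfolding u_def by simp
        have fu: "f i x = ennreal (u i)" if "i \<in> S" for i using x1 that unfolding u_def by (cases "f i x") auto
        have "(\<Sum>i\<in>S. f i x) = (\<Sum>i\<in>S'. f i x)"
          by (rule sum.mono_neutral_right[OF S S'S]) (use x2 in auto)
        also have "\<dots> = ennreal (\<Sum>i\<in>S'. u i)" using fu S'S u0 by (simp add: sum_ennreal subset_iff)
        finally have sumeq: "(\<Sum>i\<in>S. f i x) = ennreal (\<Sum>i\<in>S'. u i)" .
        have rhseq: "(\<Sum>i\<in>S'. ennreal (c i) * enn_powr (f i x) r) = ennreal (\<Sum>i\<in>S'. c i * u i powr r)"
          using fu S'S u0 c0 by (simp add: subset_iff enn_powr_ennreal ennreal_mult[symmetric] sum_ennreal)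
        have conv: "(\<Sum>i\<in>S'. (n i / s) *\<^sub>R (s * u i / n i)) powr r \<le> (\<Sum>i\<in>S'. (n i / s) * (s * u i / n i) powr r)"
        proof (rule convex_on_sum[OF finS' False convex_powr_nonneg[OF r]])
          show "(\<Sum>i\<in>S'. n i / s) = 1" using spos by (simp add: s_def sum_divide_distrib[symmetric])
          show "\<And>i. i \<in> S' \<Longrightarrow> 0 \<le> n i / s" using spos n0 by simp
          show "\<And>i. i \<in> S' \<Longrightarrow> s * u i / n i \<in> {0..}" using spos n0 u0 by simp
        qed
        have e1: "(\<Sum>i\<in>S'. (n i / s) *\<^sub>R (s * u i / n i)) = (\<Sum>i\<in>S'. u i)"
          by (rule sum.cong) (use spos in \<open>auto simp: S'_def\<close>)
        have e2: "(n i / s) * (s * u i / n i) powr r = c i * u i powr r" if "i \<in> S'" for i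
        proof -
          have "(s * u i / n i) powr r = s powr r * u i powr r / n i powr r"
            using that spos u0[of i] n0[of i] by (simp add: S'_def powr_divide powr_mult)
          thus ?thesis by (simp add: c_def)
        qed
        have "(\<Sum>i\<in>S'. u i) powr r \<le> (\<Sum>i\<in>S'. c i * u i powr r)"
        proof -
          have "(\<Sum>i\<in>S'. (n i / s) * (s * u i / n i) powr r) = (\<Sum>i\<in>S'. c i * u i powr r)"
            using e2 by (intro sum.cong) (rule refl, blast)
          thus ?thesis using conv unfolding e1 by simp
        qed
        thus ?thesis unfolding sumeq rhseq
          by (simp add: enn_powr_ennreal sum_nonneg u0 ennreal_leI)
      qed
      have "(\<integral>\<^sup>+x. enn_powr (\<Sum>i\<in>S. f i x) r \<partial>M) \<le> (\<integral>\<^sup>+x. (\<Sum>i\<in>S'. ennreal (c i) * enn_powr (f i x) r) \<partial>M)"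
      proof (rule nn_integral_mono_AE)
        show "AE x in M. enn_powr (\<Sum>i\<in>S. f i x) r \<le> (\<Sum>i\<in>S'. ennreal (c i) * enn_powr (f i x) r)"
          using aefin aezero by eventually_elim (rule pw; auto)
      qed
      also have "\<dots> = (\<Sum>i\<in>S'. ennreal (c i) * NN i)"
        unfolding NN_def using fm S'S
        by (subst nn_integral_sum) (auto intro!: sum.cong nn_integral_cmult)
      also have "\<dots> = (\<Sum>i\<in>S'. ennreal ((n i / s) * s powr r))"
      proof (rule sum.cong)
        fix i assume i: "i \<in> S'"
        hence "n i > 0" by (simp add: S'_def)
        have "c i * n i powr r = (n i / s) * s powr r" using \<open>n i > 0\<close> by (simp add: c_def)
        moreover have "NN i = ennreal (n i powr r)" using i S'S by (intro NNn) auto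
        ultimately show "ennreal (c i) * NN i = ennreal ((n i / s) * s powr r)"
          using c0[of i] by (simp add: ennreal_mult[symmetric])
      qed simp
      also have "\<dots> = ennreal (s powr r)"
      proof -
        have "(\<Sum>i\<in>S'. (n i / s) * s powr r) = (\<Sum>i\<in>S'. n i) / s * s powr r"
          by (simp add: sum_divide_distrib[symmetric] sum_distrib_right[symmetric])
        also have "\<dots> = s powr r" using spos by (simp add: s_def)
        finally have "(\<Sum>i\<in>S'. (n i / s) * s powr r) = s powr r" .
        moreover have "(\<Sum>i\<in>S'. ennreal ((n i / s) * s powr r)) = ennreal (\<Sum>i\<in>S'. (n i / s) * s powr r)"
          using spos n0 by (intro sum_ennreal) simp
        ultimately show ?thesis by simp
      qed
      finally have le: "(\<integral>\<^sup>+x. enn_powr (\<Sum>i\<in>S. f i x) r \<partial>M) \<le> ennreal (s powr r)" .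
      have "enn_powr (\<integral>\<^sup>+x. enn_powr (\<Sum>i\<in>S. f i x) r \<partial>M) (1/r) \<le> enn_powr (ennreal (s powr r)) (1/r)"
        by (rule enn_powr_mono[OF _ le]) (use r in simp)
      also have "\<dots> = ennreal s" using spos r by (simp add: enn_powr_ennreal powr_powr)
      finally show ?thesis using RHS unfolding NN_def by simp
    qed
  qed
qed



lemma norm_e[simp]: "cmod (e z) = 1"
  by (simp add: e_def)

lemma e_add: "e (a + b) = e a * e b"
  by (simp add: e_def exp_add[symmetric] algebra_simps)

lemma e_measurable[measurable]: "e \<in> borel_measurable borel"
  unfolding e_def by (intro borel_measurable_continuous_onI continuous_intros)

lemma E1_alt: "E1 Q U g = (\<lambda>x. \<integral>w. indicator U w *\<^sub>R (g w * e (fst x * fst w + fst (snd x) * snd w + snd (snd x) \<bullet> Q (fst w))) \<partial>lebesgue)"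
  by (auto simp: E1_def set_lebesgue_integral_def split_beta fun_eq_iff)

lemma E3_alt: "E3 Q I h = (\<lambda>y. \<integral>r. indicator I r *\<^sub>R (h r * e (fst y * r + snd y \<bullet> Q r)) \<partial>lebesgue)"
  by (auto simp: E3_def set_lebesgue_integral_def split_beta fun_eq_iff)

lemma E1_measurable:
  fixes Q :: "real \<Rightarrow> 'a::euclidean_space"
  assumes Qm: "Q \<in> borel_measurable lebesgue" and U: "U \<in> sets (lebesgue :: (real \<times> real) measure)"
    and gm: "g \<in> borel_measurable (lebesgue :: (real \<times> real) measure)"
  shows "E1 Q U g \<in> borel_measurable (lborel :: (real \<times> real \<times> 'a) measure)"
proof -
  interpret L: sigma_finite_measure "lebesgue :: (real \<times> real) measure" by (rule lebesgue_sigma_finite)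
  define Qf where "Qf = (\<lambda>w :: real \<times> real. Q (fst w))"
  have [measurable]: "Qf \<in> borel_measurable lebesgue" unfolding Qf_def by (rule measurable_fst_lebesgue[OF Qm])
  have [measurable]: "U \<in> sets lebesgue" "g \<in> borel_measurable lebesgue" using U gm by auto
  have [measurable]: "(\<lambda>x::real\<times>real\<times>'a. fst x) \<in> borel_measurable lborel"
    by (simp only: measurable_lborel2, rule borel_measurable_continuous_onI, intro continuous_intros)
  have [measurable]: "(\<lambda>x::real\<times>real\<times>'a. fst (snd x)) \<in> borel_measurable lborel"
    by (simp only: measurable_lborel2, rule borel_measurable_continuous_onI, intro continuous_intros)
  have [measurable]: "(\<lambda>x::real\<times>real\<times>'a. snd (snd x)) \<in> borel_measurable lborel"
    by (simp only: measurable_lborel2, rule borel_measurable_continuous_onI, intro continuous_intros)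
  have [measurable]: "(\<lambda>w::real\<times>real. fst w) \<in> borel_measurable lebesgue"
    by (rule measurable_completion, simp only: measurable_lborel2, rule borel_measurable_continuous_onI, intro continuous_intros)
  have [measurable]: "(\<lambda>w::real\<times>real. snd w) \<in> borel_measurable lebesgue"
    by (rule measurable_completion, simp only: measurable_lborel2, rule borel_measurable_continuous_onI, intro continuous_intros)
  have "(\<lambda>(x :: real \<times> real \<times> 'a, w). indicator U w *\<^sub>R (g w * e (fst x * fst w + fst (snd x) * snd w + snd (snd x) \<bullet> Qf w)))
     \<in> borel_measurable (lborel \<Otimes>\<^sub>M lebesgue)"
    by measurable
  hence "(\<lambda>x :: real \<times> real \<times> 'a. \<integral>w. indicator U w *\<^sub>R (g w * e (fst x * fst w + fst (snd x) * snd w + snd (snd x) \<bullet> Qf w)) \<partial>lebesgue)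
     \<in> borel_measurable lborel"
    by (rule L.borel_measurable_lebesgue_integral)
  thus ?thesis unfolding E1_alt Qf_def .
qed



lemma E1_E3:
  fixes Q :: "real \<Rightarrow> 'a::euclidean_space" and g :: "real \<times> real \<Rightarrow> complex"
  assumes Qm: "Q \<in> borel_measurable lebesgue" and J: "J \<in> sets lebesgue" "J \<subseteq> {0..1}"
    and gm: "g \<in> borel_measurable lebesgue"
    and gi: "integrable lebesgue (\<lambda>w. indicator ({0..1::real}\<times>{0..1::real}) w *\<^sub>R g w)"
  shows "E1 Q (J \<times> {0..1}) g (x1, x2, x3) =
    E3 Q J (\<lambda>r. \<integral>s. indicator ({0..1::real}\<times>{0..1::real}) (r, s) *\<^sub>R (g (r, s) * e (x2 * s)) \<partial>lebesgue) (x1, x3)"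
proof -
  define h where "h r = (\<integral>s. indicator ({0..1::real}\<times>{0..1::real}) (r, s) *\<^sub>R (g (r, s) * e (x2 * s)) \<partial>lebesgue)" for r
  define \<phi> where "\<phi> w = indicator (J \<times> {0..1}) w *\<^sub>R (g w * e (x1 * fst w + x2 * snd w + x3 \<bullet> Q (fst w)))" for w
  have JU: "J \<times> {0..1::real} \<in> sets (lebesgue :: (real \<times> real) measure)"
  proof -
    have "J \<times> (UNIV::real set) \<in> sets (lebesgue :: (real \<times> real) measure)" by (rule sets_lebesgue_Times_UNIV[OF J(1)])
    moreover have "(UNIV::real set) \<times> {0..1::real} \<in> sets (lebesgue :: (real \<times> real) measure)"
      by (rule sets_lebesgue_UNIV_Times) simp
    moreover have "J \<times> {0..1::real} = (J \<times> UNIV) \<inter> (UNIV \<times> {0..1})" by auto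
    ultimately show ?thesis by simp
  qed
  have [measurable]: "(\<lambda>w::real\<times>real. fst w) \<in> borel_measurable lebesgue"
    by (rule measurable_completion, simp only: measurable_lborel2, rule borel_measurable_continuous_onI, intro continuous_intros)
  have [measurable]: "(\<lambda>w::real\<times>real. snd w) \<in> borel_measurable lebesgue"
    by (rule measurable_completion, simp only: measurable_lborel2, rule borel_measurable_continuous_onI, intro continuous_intros)
  define Qf where "Qf = (\<lambda>w :: real \<times> real. Q (fst w))"
  have [measurable]: "Qf \<in> borel_measurable lebesgue" unfolding Qf_def by (rule measurable_fst_lebesgue[OF Qm])
  have [measurable]: "J \<times> {0..1::real} \<in> sets lebesgue" "g \<in> borel_measurable lebesgue" using JU gm by auto
  have \<phi>m: "\<phi> \<in> borel_measurable lebesgue"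
  proof -
    have "(\<lambda>w. indicator (J \<times> {0..1}) w *\<^sub>R (g w * e (x1 * fst w + x2 * snd w + x3 \<bullet> Qf w))) \<in> borel_measurable lebesgue"
      by measurable
    thus ?thesis unfolding \<phi>_def Qf_def .
  qed
  have \<phi>i: "integrable lebesgue \<phi>"
  proof (rule Bochner_Integration.integrable_bound[OF gi \<phi>m])
    show "AE w in lebesgue. norm (\<phi> w) \<le> norm (indicator ({0..1::real}\<times>{0..1::real}) w *\<^sub>R g w)"
      using J(2) by (auto simp: \<phi>_def indicator_def norm_mult subset_iff)
  qed
  have "E1 Q (J \<times> {0..1}) g (x1, x2, x3) = integral\<^sup>L lebesgue \<phi>" by (simp add: E1_alt \<phi>_def[abs_def])
  also have "\<dots> = (\<integral>r. (\<integral>s. \<phi> (r, s) \<partial>lebesgue) \<partial>lebesgue)" by (rule lebesgue_fubini(2)[OF \<phi>i])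
  also have "\<dots> = (\<integral>r. indicator J r *\<^sub>R (h r * e (x1 * r + x3 \<bullet> Q r)) \<partial>lebesgue)"
  proof (rule Bochner_Integration.integral_cong[OF refl])
    fix r :: real assume "r \<in> space lebesgue"
    have "\<phi> (r, s) = (indicator ({0..1::real}\<times>{0..1::real}) (r, s) *\<^sub>R (g (r, s) * e (x2 * s))) *
        (indicator J r *\<^sub>R e (x1 * r + x3 \<bullet> Q r))" for s
    proof -
      have "e (x1 * r + x2 * s + x3 \<bullet> Q r) = e (x2 * s) * e (x1 * r + x3 \<bullet> Q r)"
        by (simp add: e_add[symmetric] algebra_simps)
      thus ?thesis using J(2) by (auto simp: \<phi>_def indicator_def subset_iff)
    qed
    hence "(\<lambda>s. \<phi> (r, s)) = (\<lambda>s. (indicator ({0..1::real}\<times>{0..1::real}) (r, s) *\<^sub>R (g (r, s) * e (x2 * s))) *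
        (indicator J r *\<^sub>R e (x1 * r + x3 \<bullet> Q r)))" by (rule ext)
    hence "(\<integral>s. \<phi> (r, s) \<partial>lebesgue) = h r * (indicator J r *\<^sub>R e (x1 * r + x3 \<bullet> Q r))"
      unfolding h_def by (simp only: integral_mult_left_zero)
    thus "(\<integral>s. \<phi> (r, s) \<partial>lebesgue) = indicator J r *\<^sub>R (h r * e (x1 * r + x3 \<bullet> Q r))"
      by simp
  qed
  also have "\<dots> = E3 Q J h (x1, x3)" by (simp add: E3_alt)
  finally show ?thesis unfolding h_def .
qed



lemma JU_sets: "J \<in> sets (lebesgue :: real measure) \<Longrightarrow> J \<times> {0..1::real} \<in> sets (lebesgue :: (real \<times> real) measure)"
proof -
  assume J: "J \<in> sets (lebesgue :: real measure)"
  have "J \<times> (UNIV::real set) \<in> sets (lebesgue :: (real \<times> real) measure)" by (rule sets_lebesgue_Times_UNIV[OF J])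
  moreover have "(UNIV::real set) \<times> {0..1::real} \<in> sets (lebesgue :: (real \<times> real) measure)"
    by (rule sets_lebesgue_UNIV_Times) simp
  moreover have "J \<times> {0..1::real} = (J \<times> UNIV) \<inter> (UNIV \<times> {0..1})" by auto
  ultimately show ?thesis by simp
qed

theorem lemma3p2:
  fixes p q C :: real and l :: nat
    and Q1 :: "real \<Rightarrow> 'a::euclidean_space"
    and I :: "nat \<Rightarrow> real set"
    and B :: "(real \<times> 'a) set"
  assumes "p \<ge> q" and "q \<ge> 1"
    and "Q1 \<in> borel_measurable lebesgue"
    and "\<forall>i\<in>{1..l}. I i \<in> sets lebesgue"
    and "disjoint_family_on I {1..l}"
    and "(\<Union>i\<in>{1..l}. I i) = {0..1}"
    and "B \<in> sets lebesgue"
    and "\<forall>h :: real \<Rightarrow> complex. h \<in> borel_measurable lebesgue \<longrightarrow>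
           Lp_norm p lebesgue B (E3 Q1 {0..1} h)
             \<le> ennreal C * enn_powr (\<Sum>i\<in>{1..l}. enn_powr (Lp_norm p lebesgue B (E3 Q1 (I i) h)) q) (1 / q)"
  shows "\<forall>(B' :: real set) (g :: real \<times> real \<Rightarrow> complex).
           B' \<in> sets lebesgue \<longrightarrow> g \<in> borel_measurable lebesgue \<longrightarrow>
           (let BB = {(x1, x2, x3). (x1, x3) \<in> B \<and> x2 \<in> B'} in
            Lp_norm p lebesgue BB (E1 Q1 ({0..1} \<times> {0..1}) g)
              \<le> ennreal C * enn_powr (\<Sum>i\<in>{1..l}. enn_powr (Lp_norm p lebesgue BB (E1 Q1 (I i \<times> {0..1}) g)) q) (1 / q))"
proof (intro allI impI)
  fix B' :: "real set" and g :: "real \<times> real \<Rightarrow> complex"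
  assume B': "B' \<in> sets lebesgue" and gm: "g \<in> borel_measurable lebesgue"
  have p1: "p \<ge> 1" and p0: "p > 0" and q0: "q > 0" using assms(1,2) by auto
  have Qm: "Q1 \<in> borel_measurable lebesgue" using assms(3) .
  have Ism: "\<And>i. i \<in> {1..l} \<Longrightarrow> I i \<in> sets lebesgue" using assms(4) by auto
  have Isub: "\<And>i. i \<in> {1..l} \<Longrightarrow> I i \<subseteq> {0..1}" using assms(6) by auto
  have Bm: "B \<in> sets lebesgue" using assms(7) .
  have BBeq: "{(x1, x2, x3). (x1, x3) \<in> B \<and> x2 \<in> B'} = BBset B B'" by (auto simp: BBset_def)
  have [measurable]: "(\<lambda>w::real\<times>real. fst w) \<in> borel_measurable lebesgue"
    by (rule measurable_completion, simp only: measurable_lborel2, rule borel_measurable_continuous_onI, intro continuous_intros)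
  have [measurable]: "(\<lambda>w::real\<times>real. snd w) \<in> borel_measurable lebesgue"
    by (rule measurable_completion, simp only: measurable_lborel2, rule borel_measurable_continuous_onI, intro continuous_intros)
  have sq[measurable]: "{0..1::real} \<times> {0..1::real} \<in> sets lebesgue" by (rule JU_sets) simp
  have gm'[measurable]: "g \<in> borel_measurable lebesgue" using gm .
  have goal: "Lp_norm p lebesgue (BBset B B') (E1 Q1 ({0..1} \<times> {0..1}) g)
      \<le> ennreal C * enn_powr (\<Sum>i\<in>{1..l}. enn_powr (Lp_norm p lebesgue (BBset B B') (E1 Q1 (I i \<times> {0..1}) g)) q) (1 / q)"
  proof (cases "integrable lebesgue (\<lambda>w. indicator ({0..1::real}\<times>{0..1::real}) w *\<^sub>R g w)")
    case False
    have "E1 Q1 ({0..1}\<times>{0..1}) g z = 0" for z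
    proof -
      have "\<not> integrable lebesgue (\<lambda>w. indicator ({0..1::real}\<times>{0..1::real}) w *\<^sub>R (g w * e (fst z * fst w + fst (snd z) * snd w + snd (snd z) \<bullet> Q1 (fst w))))"
      proof
        assume i: "integrable lebesgue (\<lambda>w. indicator ({0..1::real}\<times>{0..1::real}) w *\<^sub>R (g w * e (fst z * fst w + fst (snd z) * snd w + snd (snd z) \<bullet> Q1 (fst w))))"
        have "integrable lebesgue (\<lambda>w. indicator ({0..1::real}\<times>{0..1::real}) w *\<^sub>R g w)"
          by (rule Bochner_Integration.integrable_bound[OF i]) (auto simp: norm_mult indicator_def)
        with False show False by simp
      qed
      thus ?thesis by (simp add: E1_alt not_integrable_integral_eq)
    qed
    hence "Lp_norm p lebesgue (BBset B B') (E1 Q1 ({0..1}\<times>{0..1}) g) = 0"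
      using p0 by (simp add: Lp_norm_def)
    thus ?thesis by simp
  next
    case True
    define h where "h x2 r = (\<integral>s. indicator ({0..1::real}\<times>{0..1::real}) (r, s) *\<^sub>R (g (r, s) * e (x2 * s)) \<partial>lebesgue)" for x2 r
    have hm: "h x2 \<in> borel_measurable lebesgue" for x2
    proof -
      have m: "(\<lambda>w. indicator ({0..1::real}\<times>{0..1::real}) w *\<^sub>R (g w * e (x2 * snd w))) \<in> borel_measurable lebesgue"
        by measurable
      have "integrable lebesgue (\<lambda>w. indicator ({0..1::real}\<times>{0..1::real}) w *\<^sub>R (g w * e (x2 * snd w)))"
        by (rule Bochner_Integration.integrable_bound[OF True m]) (auto simp: norm_mult indicator_def)
      from lebesgue_fubini(1)[OF this] show ?thesis by (simp add: h_def[abs_def])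
    qed
    have K: "E1 Q1 (J \<times> {0..1}) g (x1, x2, x3) = E3 Q1 J (h x2) (x1, x3)"
      if "J \<in> sets lebesgue" "J \<subseteq> {0..1}" for J x1 x2 x3
      using E1_E3[OF Qm that gm True] unfolding h_def[abs_def] by simp
    define G where "G J z = ennreal (cmod (E1 Q1 (J \<times> {0..1}) g z) powr p)" for J z
    have Gm: "G J \<in> borel_measurable lborel" if "J \<in> sets lebesgue" for J
    proof -
      have [measurable]: "E1 Q1 (J \<times> {0..1}) g \<in> borel_measurable lborel"
        by (rule E1_measurable[OF Qm JU_sets[OF that] gm])
      show ?thesis unfolding G_def[abs_def] by measurable
    qed
    define PhiB where "PhiB F = (\<integral>\<^sup>+y. ennreal (cmod (F y) powr p) * indicator B y \<partial>lebesgue)" for F :: "real \<times> 'a \<Rightarrow> complex"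
    have LpB: "Lp_norm p lebesgue B F = enn_powr (PhiB F) (1/p)" for F by (simp add: Lp_norm_def PhiB_def)
    have LpBB: "Lp_norm p lebesgue (BBset B B') (E1 Q1 (J \<times> {0..1}) g) =
        enn_powr (\<integral>\<^sup>+z. G J z * indicator (BBset B B') z \<partial>lebesgue) (1/p)" for J
      by (simp add: Lp_norm_def G_def)
    have decJ: "\<exists>A. A \<in> borel_measurable lborel \<and>
        (\<integral>\<^sup>+z. G J z * indicator (BBset B B') z \<partial>lebesgue) = (\<integral>\<^sup>+x2. A x2 \<partial>lborel) \<and>
        (AE x2 in lborel. A x2 = indicator B' x2 * PhiB (E3 Q1 J (h x2)))"
      if J: "J \<in> sets lebesgue" "J \<subseteq> {0..1}" for J
    proof -
      obtain A where A: "A \<in> borel_measurable lborel"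
        "(\<integral>\<^sup>+z. G J z * indicator (BBset B B') z \<partial>lebesgue) = (\<integral>\<^sup>+x2. A x2 \<partial>lborel)"
        "AE x2 in lborel. A x2 = indicator B' x2 * (\<integral>\<^sup>+y. G J (fst y, x2, snd y) * indicator B y \<partial>lebesgue)"
        using decomp[OF Gm[OF J(1)] Bm B'] by blast
      have "(\<integral>\<^sup>+y. G J (fst y, x2, snd y) * indicator B y \<partial>lebesgue) = PhiB (E3 Q1 J (h x2))" for x2
        unfolding PhiB_def G_def using K[OF J] by (intro nn_integral_cong) (simp add: split_beta)
      thus ?thesis using A by (intro exI[of _ A]) simp
    qed
    obtain A0 where A0: "A0 \<in> borel_measurable lborel"
        "(\<integral>\<^sup>+z. G {0..1} z * indicator (BBset B B') z \<partial>lebesgue) = (\<integral>\<^sup>+x2. A0 x2 \<partial>lborel)"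
        "AE x2 in lborel. A0 x2 = indicator B' x2 * PhiB (E3 Q1 {0..1} (h x2))"
      using decJ[of "{0..1}"] by auto
    have "\<forall>i\<in>{1..l}. \<exists>A. A \<in> borel_measurable lborel \<and>
        (\<integral>\<^sup>+z. G (I i) z * indicator (BBset B B') z \<partial>lebesgue) = (\<integral>\<^sup>+x2. A x2 \<partial>lborel) \<and>
        (AE x2 in lborel. A x2 = indicator B' x2 * PhiB (E3 Q1 (I i) (h x2)))"
    proof (intro ballI)
      fix i assume i: "i \<in> {1..l}"
      show "\<exists>A. A \<in> borel_measurable lborel \<and>
        (\<integral>\<^sup>+z. G (I i) z * indicator (BBset B B') z \<partial>lebesgue) = (\<integral>\<^sup>+x2. A x2 \<partial>lborel) \<and>
        (AE x2 in lborel. A x2 = indicator B' x2 * PhiB (E3 Q1 (I i) (h x2)))"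
        by (rule decJ[OF Ism[OF i] Isub[OF i]])
    qed
    from bchoice[OF this] obtain A where Aall: "\<forall>i\<in>{1..l}. A i \<in> borel_measurable lborel \<and>
        (\<integral>\<^sup>+z. G (I i) z * indicator (BBset B B') z \<partial>lebesgue) = (\<integral>\<^sup>+x2. A i x2 \<partial>lborel) \<and>
        (AE x2 in lborel. A i x2 = indicator B' x2 * PhiB (E3 Q1 (I i) (h x2)))" ..
    have A: "\<And>i. i \<in> {1..l} \<Longrightarrow> A i \<in> borel_measurable lborel"
        "\<And>i. i \<in> {1..l} \<Longrightarrow> (\<integral>\<^sup>+z. G (I i) z * indicator (BBset B B') z \<partial>lebesgue) = (\<integral>\<^sup>+x2. A i x2 \<partial>lborel)"
        "\<And>i. i \<in> {1..l} \<Longrightarrow> AE x2 in lborel. A i x2 = indicator B' x2 * PhiB (E3 Q1 (I i) (h x2))"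
      using Aall by auto
    define c where "c = ennreal C"
    have ex1: "1/p*q = q/p" "1/q*p = p/q" "q/p*(p/q) = 1" "1/(p/q) = q/p" "p * (1/p) = 1" "p/q*(1/p) = 1/q" "1/p*p = 1"
      using p0 q0 by auto
    have pw: "AE x2 in lborel. A0 x2 \<le> enn_powr c p * enn_powr (\<Sum>i\<in>{1..l}. enn_powr (A i x2) (q/p)) (p/q)"
    proof -
      have "AE x2 in lborel. \<forall>i\<in>{1..l}. A i x2 = indicator B' x2 * PhiB (E3 Q1 (I i) (h x2))"
        using A(3) by (subst AE_finite_all) auto
      with A0(3) show ?thesis
      proof eventually_elim
        case (elim x2)
        show ?case
        proof (cases "x2 \<in> B'")
          case False
          thus ?thesis using elim by simp
        next
          case True
          have eqs: "A0 x2 = PhiB (E3 Q1 {0..1} (h x2))" "\<And>i. i \<in> {1..l} \<Longrightarrow> A i x2 = PhiB (E3 Q1 (I i) (h x2))"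
            using elim True by auto
          have hyp: "enn_powr (PhiB (E3 Q1 {0..1} (h x2))) (1/p) \<le>
              c * enn_powr (\<Sum>i\<in>{1..l}. enn_powr (enn_powr (PhiB (E3 Q1 (I i) (h x2))) (1/p)) q) (1/q)"
            using assms(8) hm[of x2] by (simp add: LpB c_def)
          have "enn_powr (enn_powr (PhiB (E3 Q1 {0..1} (h x2))) (1/p)) p \<le>
              enn_powr (c * enn_powr (\<Sum>i\<in>{1..l}. enn_powr (enn_powr (PhiB (E3 Q1 (I i) (h x2))) (1/p)) q) (1/q)) p"
            by (rule enn_powr_mono[OF _ hyp]) (use p0 in simp)
          also have "\<dots> = enn_powr c p * enn_powr (\<Sum>i\<in>{1..l}. enn_powr (A i x2) (q/p)) (p/q)"
          proof -
            have "(\<Sum>i\<in>{1..l}. enn_powr (enn_powr (PhiB (E3 Q1 (I i) (h x2))) (1/p)) q) = (\<Sum>i\<in>{1..l}. enn_powr (A i x2) (q/p))"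
            proof (rule sum.cong[OF refl])
              fix i assume i: "i \<in> {1..l}"
              show "enn_powr (enn_powr (PhiB (E3 Q1 (I i) (h x2))) (1/p)) q = enn_powr (A i x2) (q/p)"
                by (simp only: enn_powr_powr ex1(1) eqs(2)[OF i])
            qed
            thus ?thesis by (simp only: enn_powr_mult[OF p0] enn_powr_powr ex1(2))
          qed
          finally show ?thesis by (simp only: enn_powr_powr ex1(7) enn_powr_1 eqs(1))
        qed
      qed
    qed
    define T where "T x2 = enn_powr (\<Sum>i\<in>{1..l}. enn_powr (A i x2) (q/p)) (p/q)" for x2
    have Tm: "T \<in> borel_measurable lborel"
      unfolding T_def by (rule borel_measurable_enn_powr, rule borel_measurable_sum, rule borel_measurable_enn_powr, rule A(1), simp)
    define \<Sigma> where "\<Sigma> = (\<Sum>i\<in>{1..l}. enn_powr (\<integral>\<^sup>+x2. A i x2 \<partial>lborel) (q/p))"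
    have "(\<integral>\<^sup>+x2. A0 x2 \<partial>lborel) \<le> (\<integral>\<^sup>+x2. enn_powr c p * T x2 \<partial>lborel)"
      by (rule nn_integral_mono_AE) (use pw in \<open>simp add: T_def\<close>)
    also have "\<dots> = enn_powr c p * (\<integral>\<^sup>+x2. T x2 \<partial>lborel)" by (rule nn_integral_cmult[OF Tm])
    also have "(\<integral>\<^sup>+x2. T x2 \<partial>lborel) \<le> enn_powr \<Sigma> (p/q)"
    proof -
      have mk: "enn_powr (\<integral>\<^sup>+x. enn_powr (\<Sum>i\<in>{1..l}. enn_powr (A i x) (q/p)) (p/q) \<partial>lborel) (1/(p/q))
          \<le> (\<Sum>i\<in>{1..l}. enn_powr (\<integral>\<^sup>+x. enn_powr (enn_powr (A i x) (q/p)) (p/q) \<partial>lborel) (1/(p/q)))"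
      proof (rule minkowski_enn)
        show "finite {1..l}" by simp
        show "1 \<le> p / q" using assms(1) q0 by simp
        fix i assume i: "i \<in> {1..l}"
        show "(\<lambda>x. enn_powr (A i x) (q/p)) \<in> borel_measurable lborel"
          by (rule borel_measurable_enn_powr[OF A(1)[OF i]])
      qed
      hence "enn_powr (\<integral>\<^sup>+x2. T x2 \<partial>lborel) (q/p) \<le> \<Sigma>"
        unfolding T_def \<Sigma>_def by (simp only: enn_powr_powr ex1(3,4) enn_powr_1)
      hence "enn_powr (enn_powr (\<integral>\<^sup>+x2. T x2 \<partial>lborel) (q/p)) (p/q) \<le> enn_powr \<Sigma> (p/q)"
        by (rule enn_powr_mono[rotated]) (use p0 q0 in simp)
      thus ?thesis by (simp only: enn_powr_powr ex1(3) enn_powr_1)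
    qed
    hence "enn_powr c p * (\<integral>\<^sup>+x2. T x2 \<partial>lborel) \<le> enn_powr c p * enn_powr \<Sigma> (p/q)"
      by (rule mult_left_mono) simp
    finally have main: "(\<integral>\<^sup>+x2. A0 x2 \<partial>lborel) \<le> enn_powr c p * enn_powr \<Sigma> (p/q)" .
    have "Lp_norm p lebesgue (BBset B B') (E1 Q1 ({0..1} \<times> {0..1}) g) = enn_powr (\<integral>\<^sup>+x2. A0 x2 \<partial>lborel) (1/p)"
      using A0(2) by (simp add: LpBB)
    also have "\<dots> \<le> enn_powr (enn_powr c p * enn_powr \<Sigma> (p/q)) (1/p)"
      by (rule enn_powr_mono[OF _ main]) (use p0 in simp)
    also have "\<dots> = c * enn_powr \<Sigma> (1/q)"
    proof -
      have "0 < 1/p" using p0 by simp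
      thus ?thesis by (simp only: enn_powr_mult enn_powr_powr ex1(5,6) enn_powr_1)
    qed
    also have "\<Sigma> = (\<Sum>i\<in>{1..l}. enn_powr (Lp_norm p lebesgue (BBset B B') (E1 Q1 (I i \<times> {0..1}) g)) q)"
      unfolding \<Sigma>_def
    proof (rule sum.cong[OF refl])
      fix i assume i: "i \<in> {1..l}"
      show "enn_powr (\<integral>\<^sup>+x2. A i x2 \<partial>lborel) (q/p) = enn_powr (Lp_norm p lebesgue (BBset B B') (E1 Q1 (I i \<times> {0..1}) g)) q"
        by (simp only: LpBB A(2)[OF i] enn_powr_powr ex1(1))
    qed
    finally show ?thesis by (simp add: c_def)
  qed
  thus "let BB = {(x1, x2, x3). (x1, x3) \<in> B \<and> x2 \<in> B'} in
            Lp_norm p lebesgue BB (E1 Q1 ({0..1} \<times> {0..1}) g)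
              \<le> ennreal C * enn_powr (\<Sum>i\<in>{1..l}. enn_powr (Lp_norm p lebesgue BB (E1 Q1 (I i \<times> {0..1}) g)) q) (1 / q)"
    unfolding Let_def BBeq .
qed


end
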